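(* Fix a sample size $n\ge 2$, a bag size $m\ge1$ (with $m\le n-1$ in the subbagging case), and $\varepsilon>0$. For any (deterministic, measurable) base learning algorithm $\mathcal{A}$ with outputs in $\Delta_{L-1}$, the classification algorithm $\mathcal{C}=\mathrm{argmax}^\varepsilon\circ\widetilde{\mathcal{A}}_m$, i.e. $\mathcal{C}(\mathcal{D},x)=\mathrm{argmax}^\varepsilon\big(\widetilde{\mathcal{A}}_m(\mathcal{D})(x)\big)$, has selection stability $\delta$ at sample size $n$, where $$\delta=\varepsilon^{-2}\cdot\frac{1-1/L}{n-1}\cdot\frac{p_{n,m}}{1-p_{n,m}},$$ with $p_{n,m}=1-(1-1/n)^m$ for bootstrapping and $p_{n,m}=m/n$ for subbagging.
   Context: Feature space $\mathcal{X}$, labels $[L]=\{1,\dots,L\}$, simplex $\Delta_{L-1}=\{w\in\mathbb{R}^L:w_i\ge0,\sum_iw_i=1\}$, $\|\cdot\|$ Euclidean norm. A learning algorithm $\mathcal{A}$ maps any data set $\mathcal{D}\in\bigcup_{n\ge0}(\mathcal{X}\times[L])^n$ to a function $\mathcal{A}(\mathcal{D}):\mathcal{X}\to\Delta_{L-1}$. For a data set $\mathcal{D}=((X_i,Y_i))_{i\in[N]}$ of size $N$ and a sequence $r=(i_1,\dots,i_m)\in[N]^m$, $\mathcal{D}^r=((X_{i_1},Y_{i_1}),\dots,(X_{i_m},Y_{i_m}))$. The bagged algorithm is $\widetilde{\mathcal{A}}_m(\mathcal{D})(x)=\mathbb{E}_r[\mathcal{A}(\mathcal{D}^r)(x)]$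 (exact expectation), where for bootstrapping $r$ consists of $m$ indices drawn uniformly with replacement from $[N]$, and for subbagging $r$ consists of $m\le N$ indices drawn uniformly without replacement from $[N]$. Inflated argmax: for $j\in[L]$ let $R_j^\varepsilon=\{w\in\mathbb{R}^L: w_j\ge\max_{\ell\neq j}w_\ell+\varepsilon/\sqrt2\}$ and $\mathrm{argmax}^\varepsilon(w)=\{j\in[L]:\mathrm{dist}(w,R_j^\varepsilon)<\varepsilon\}$, with $\mathrm{dist}(w,R)=\inf_{v\in R}\|w-v\|$. For $\mathcal{D}=((X_j,Y_j))_{j\in[n]}$, $\mathcal{D}^{\setminus i}$ is $\mathcal{D}$ with the $i$th point removed. A classification algorithm $\mathcal{C}$ (mapping $(\mathcal{D},x)$ to a subset of $[L]$) has selection stability $\delta$ at sample size $n$ if for all $\mathcal{D}\in(\mathcal{X}\times[L])^n$ and all $x\in\mathcal{X}$, $\frac1n\sum_{i=1}^n\mathbf{1}\{\mathcal{C}(\mathcal{D},x)\cap\mathcal{C}(\mathcal{D}^{\setminus i},x)=\varnothing\}\le\delta$. *)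

theory Defs
  imports "HOL-Analysis.Analysis"
begin

text \<open>Labels are the elements of a finite type 'l, so L = CARD('l);
  probability vectors are elements of real^'l. A data set is a list of
  (feature, label) pairs; positions are 0-based.\<close>

type_synonym ('x,'l) dataset = "('x \<times> 'l) list"
type_synonym ('x,'l) algorithm = "('x,'l) dataset \<Rightarrow> 'x \<Rightarrow> real^'l"

definition prob_simplex :: "(real^'l::finite) set" where
  "prob_simplex = {w. (\<forall>i. 0 \<le> w $ i) \<and> (\<Sum>i\<in>UNIV. w $ i) = 1}"

datatype bag_scheme = Bootstrap | Subbagging

definition index_seqs :: "bag_scheme \<Rightarrow> nat \<Rightarrow> nat \<Rightarrow> nat list set" where
  "index_seqs s N m =
     {r. length r = m \<and> set r \<subseteq> {..<N} \<and> (s = Subbagging \<longrightarrow> distinct r)}"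

text \<open>Bagged algorithm: exact expectation over uniformly drawn r.\<close>
definition bagged :: "bag_scheme \<Rightarrow> nat \<Rightarrow> ('x,'l::finite) algorithm \<Rightarrow> ('x,'l) algorithm" where
  "bagged s m A D x =
     (1 / real (card (index_seqs s (length D) m))) *\<^sub>R
       (\<Sum>r\<in>index_seqs s (length D) m. A (map (\<lambda>i. D ! i) r) x)"

definition R_region :: "real \<Rightarrow> 'l \<Rightarrow> (real^'l::finite) set" where
  "R_region \<epsilon> j = {w. \<forall>l. l \<noteq> j \<longrightarrow> w $ j \<ge> w $ l + \<epsilon> / sqrt 2}"

definition inflated_argmax :: "real \<Rightarrow> real^'l::finite \<Rightarrow> 'l set" where
  "inflated_argmax \<epsilon> w = {j. infdist w (R_region \<epsilon> j) < \<epsilon>}"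

definition remove_nth :: "nat \<Rightarrow> 'a list \<Rightarrow> 'a list" where
  "remove_nth i xs = take i xs @ drop (Suc i) xs"

definition selection_stable ::
  "(('x,'l) dataset \<Rightarrow> 'x \<Rightarrow> 'l set) \<Rightarrow> real \<Rightarrow> nat \<Rightarrow> bool" where
  "selection_stable C \<delta> n \<longleftrightarrow>
     (\<forall>D x. length D = n \<longrightarrow>
        (1 / real n) * (\<Sum>i<n. if C D x \<inter> C (remove_nth i D) x = {} then 1 else 0) \<le> \<delta>)"

definition p_nm :: "bag_scheme \<Rightarrow> nat \<Rightarrow> nat \<Rightarrow> real" where
  "p_nm s n m = (case s of Bootstrap \<Rightarrow> 1 - (1 - 1 / real n) ^ m
                          | Subbagging \<Rightarrow> real m / real n)"

end

theory Submission
  imports Defs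
begin



lemma norm_sq_vec: "(norm (x::real^'n))^2 = (\<Sum>i\<in>UNIV. (x$i)^2)"
  by (simp add: norm_vec_def L2_set_def sum_nonneg)

lemma sum_sq_le_sq_sum:
  fixes f :: "'a \<Rightarrow> real" assumes "finite A" "\<And>a. a \<in> A \<Longrightarrow> 0 \<le> f a"
  shows "(\<Sum>a\<in>A. (f a)^2) \<le> (\<Sum>a\<in>A. f a)^2"
proof -
  have "(\<Sum>a\<in>A. (f a)^2) \<le> (\<Sum>a\<in>A. f a * (\<Sum>b\<in>A. f b))"
    apply (rule sum_mono)
    using assms member_le_sum[of _ A f] by (simp add: power2_eq_square mult_left_mono)
  also have "\<dots> = (\<Sum>a\<in>A. f a)^2" by (simp add: sum_distrib_right power2_eq_square)
  finally show ?thesis .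
qed

lemma argmax_mem:
  fixes v :: "real^'l::finite"
  assumes "\<epsilon> > 0" "\<forall>l. v$l \<le> v$j"
  shows "j \<in> inflated_argmax \<epsilon> v"
proof -
  let ?y = "v + (\<epsilon>/sqrt 2) *\<^sub>R axis j 1"
  have "?y \<in> R_region \<epsilon> j" using assms by (auto simp: R_region_def axis_def)
  hence "infdist v (R_region \<epsilon> j) \<le> dist v ?y" by (rule infdist_le)
  also have "dist v ?y = \<epsilon>/sqrt 2" using assms by (simp add: dist_norm)
  also have "\<dots> < \<epsilon>" using assms by (simp add: divide_less_eq)
  finally show ?thesis by (simp add: inflated_argmax_def)
qed

lemma not_mem_far:
  assumes "j \<notin> inflated_argmax \<epsilon> u" "y \<in> R_region \<epsilon> j"
  shows "\<epsilon> \<le> dist u y"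
  using assms infdist_le[of y "R_region \<epsilon> j" u] by (simp add: inflated_argmax_def)




lemma core:
  fixes w v :: "real^'l::finite"
  assumes e: "\<epsilon> > 0"
    and fw: "\<And>y. y \<in> R_region \<epsilon> m \<Longrightarrow> \<epsilon> \<le> dist w y"
    and fv: "\<And>y. y \<in> R_region \<epsilon> m' \<Longrightarrow> \<epsilon> \<le> dist v y"
    and nb: "\<And>j. \<not> (w$j > w$m \<and> v$j > v$m')"
    and dl: "v$m' \<le> w$m"
  shows "\<epsilon> \<le> norm (v - w)"
proof -
  define c where "c = \<epsilon> / sqrt 2"
  define \<tau> where "\<tau> = w$m"
  define \<delta> where "\<delta> = w$m - v$m'"
  have c0: "c > 0" using e by (simp add: c_def)
  have ee: "\<epsilon>^2 = 2 * c^2" by (simp add: c_def power_divide)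
  have d0: "\<delta> \<ge> 0" using dl by (simp add: \<delta>_def)
  define pos where "pos = (\<lambda>l. max 0 (w$l - \<tau>))"
  define y1 :: "real^'l" where "y1 = (\<chi> l. if l = m then \<tau> + c else min (w$l) \<tau>)"
  have "y1 \<in> R_region \<epsilon> m" by (auto simp: R_region_def y1_def c_def)
  hence "\<epsilon> \<le> dist w y1" by (rule fw)
  hence "\<epsilon>^2 \<le> (dist w y1)^2" using e by (simp add: power_mono)
  also have "(dist w y1)^2 = (\<Sum>l\<in>UNIV. (if l = m then c^2 else 0) + (pos l)^2)"
    unfolding dist_norm norm_sq_vec
    by (rule sum.cong) (auto simp: y1_def pos_def \<tau>_def max_def min_def power2_eq_square)
  also have "\<dots> = c^2 + (\<Sum>l\<in>UNIV. (pos l)^2)" by (simp add: sum.distrib)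
  finally have sp2: "c^2 \<le> (\<Sum>l\<in>UNIV. (pos l)^2)" using ee by simp
  have pn: "\<And>l. 0 \<le> pos l" by (simp add: pos_def)
  have "c^2 \<le> (\<Sum>l\<in>UNIV. pos l)^2"
    using sp2 sum_sq_le_sq_sum[of UNIV pos] pn by simp
  hence sp1: "c \<le> (\<Sum>l\<in>UNIV. pos l)"
    using c0 pn by (meson power2_le_imp_le sum_nonneg)
  obtain l0 where l0: "pos l0 > 0"
  proof (rule ccontr)
    assume "\<not> thesis"
    hence "\<forall>l. pos l = 0" using pn that by (metis order_le_less)
    thus False using sp2 c0 by simp
  qed
  have pz: "\<And>l. \<not> 0 < pos l \<Longrightarrow> pos l = 0" using pn by (metis order_le_less)
  define X where "X = (\<lambda>l. if pos l > 0 then (pos l + \<delta>)^2 else 0)"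
  define vpos where "vpos = (\<lambda>l. max 0 (v$l - \<tau>))"
  define y2 :: "real^'l" where "y2 = (\<chi> l. if l = m' then \<tau> + c else min (v$l) \<tau>)"
  have "y2 \<in> R_region \<epsilon> m'" by (auto simp: R_region_def y2_def c_def)
  hence "\<epsilon> \<le> dist v y2" by (rule fv)
  hence "\<epsilon>^2 \<le> (dist v y2)^2" using e by (simp add: power_mono)
  also have "(dist v y2)^2 = (\<Sum>l\<in>UNIV. (if l = m' then (\<delta> + c)^2 else 0) + (vpos l)^2)"
    unfolding dist_norm norm_sq_vec
    apply (rule sum.cong)
    using d0 by (auto simp: y2_def vpos_def \<tau>_def \<delta>_def max_def min_def power2_eq_square algebra_simps)
  also have "\<dots> = (\<delta> + c)^2 + (\<Sum>l\<in>UNIV. (vpos l)^2)" by (simp add: sum.distrib)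
  finally have vp: "\<epsilon>^2 - (\<delta> + c)^2 \<le> (\<Sum>l\<in>UNIV. (vpos l)^2)" by simp
  have pt: "(vpos l)^2 + X l \<le> ((v - w)$l)^2" for l
  proof (cases "pos l > 0")
    case True
    hence "w$l > w$m" by (simp add: pos_def \<tau>_def)
    hence "v$l \<le> v$m'" using nb[of l] by auto
    hence a: "vpos l = 0" using \<delta>_def d0 by (simp add: vpos_def \<tau>_def)
    have "pos l + \<delta> \<le> w$l - v$l" using True \<open>v$l \<le> v$m'\<close>
      by (simp add: pos_def \<tau>_def \<delta>_def)
    hence "(pos l + \<delta>)^2 \<le> (w$l - v$l)^2" using True d0 by (simp add: power_mono)
    then show ?thesis using a True by (simp add: X_def power2_commute)
  next
    case False
    hence "w$l \<le> \<tau>" by (simp add: pos_def)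
    hence "vpos l \<le> \<bar>v$l - w$l\<bar>" by (simp add: vpos_def)
    hence "(vpos l)^2 \<le> (v$l - w$l)^2" by (metis abs_le_square_iff abs_of_nonneg max.cobounded1 vpos_def)
    then show ?thesis using False by (simp add: X_def)
  qed
  have "(\<Sum>l\<in>UNIV. X l) \<ge> (\<Sum>l\<in>UNIV. (pos l)^2 + 2*\<delta>*pos l + (if l = l0 then \<delta>^2 else 0))"
    apply (rule sum_mono)
    subgoal for l
    proof (cases "0 < pos l")
      case True
      then have "X l = (pos l)^2 + 2*\<delta>*pos l + \<delta>^2" by (simp add: X_def power2_sum)
      then show ?thesis by simp
    next
      case False then have "pos l = 0" using pz by blast
      moreover have "l \<noteq> l0" using l0 False by blast
      ultimately show ?thesis using False by (simp add: X_def)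
    qed
    done
  also have "(\<Sum>l\<in>UNIV. (pos l)^2 + 2*\<delta>*pos l + (if l = l0 then \<delta>^2 else 0))
     = (\<Sum>l\<in>UNIV. (pos l)^2) + 2*\<delta>*(\<Sum>l\<in>UNIV. pos l) + \<delta>^2"
    by (simp add: sum.distrib sum_distrib_left)
  finally have xs0: "(\<Sum>l\<in>UNIV. X l) \<ge> (\<Sum>l\<in>UNIV. (pos l)^2) + 2*\<delta>*(\<Sum>l\<in>UNIV. pos l) + \<delta>^2" .
  have "\<delta> * c \<le> \<delta> * (\<Sum>l\<in>UNIV. pos l)" using sp1 d0 by (rule mult_left_mono)
  hence xs: "(\<Sum>l\<in>UNIV. X l) \<ge> c^2 + 2*\<delta>*c + \<delta>^2" using xs0 sp2 by linarith
  have "(norm (v - w))^2 \<ge> (\<Sum>l\<in>UNIV. (vpos l)^2) + (\<Sum>l\<in>UNIV. X l)"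
    unfolding norm_sq_vec sum.distrib[symmetric] by (rule sum_mono) (rule pt)
  moreover have "(\<delta> + c)^2 = c^2 + 2*\<delta>*c + \<delta>^2" by (simp add: power2_sum)
  ultimately have "(norm (v - w))^2 \<ge> \<epsilon>^2" using vp xs by linarith
  thus ?thesis by (rule power2_le_imp_le) simp
qed




lemma exists_max_on:
  fixes f :: "'l::finite \<Rightarrow> real"
  assumes "B \<noteq> {}"
  obtains j where "j \<in> B" "\<And>l. l \<in> B \<Longrightarrow> f l \<le> f j"
proof -
  have fin: "finite (f ` B)" by simp
  have "Max (f ` B) \<in> f ` B" using assms by (intro Max_in) auto
  then obtain j where "j \<in> B" "f j = Max (f ` B)" by auto
  moreover have "\<And>l. l \<in> B \<Longrightarrow> f l \<le> Max (f ` B)" using fin by (auto intro: Max_ge)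
  ultimately show ?thesis using that by metis
qed

lemma compat:
  fixes w v :: "real^'l::finite"
  assumes e: "\<epsilon> > 0" and dj: "inflated_argmax \<epsilon> w \<inter> inflated_argmax \<epsilon> v = {}"
  shows "\<epsilon> \<le> norm (v - w)"
proof -
  obtain jv where jv: "\<And>l. v$l \<le> v$jv" using exists_max_on[of UNIV "\<lambda>l. v$l"] by auto
  obtain jw where jw: "\<And>l. w$l \<le> w$jw" using exists_max_on[of UNIV "\<lambda>l. w$l"] by auto
  have "jv \<in> inflated_argmax \<epsilon> v" using argmax_mem[OF e] jv by blast
  hence nw: "jv \<in> - inflated_argmax \<epsilon> w" using dj by blast
  have "jw \<in> inflated_argmax \<epsilon> w" using argmax_mem[OF e] jw by blast
  hence nv: "jw \<in> - inflated_argmax \<epsilon> v" using dj by blast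
  obtain m where m: "m \<in> - inflated_argmax \<epsilon> w" "\<And>l. l \<in> - inflated_argmax \<epsilon> w \<Longrightarrow> w$l \<le> w$m"
    using exists_max_on[of "- inflated_argmax \<epsilon> w" "\<lambda>l. w$l"] nw by blast
  obtain m' where m': "m' \<in> - inflated_argmax \<epsilon> v" "\<And>l. l \<in> - inflated_argmax \<epsilon> v \<Longrightarrow> v$l \<le> v$m'"
    using exists_max_on[of "- inflated_argmax \<epsilon> v" "\<lambda>l. v$l"] nv by blast
  have fw: "\<And>y. y \<in> R_region \<epsilon> m \<Longrightarrow> \<epsilon> \<le> dist w y" using m(1) not_mem_far by auto
  have fv: "\<And>y. y \<in> R_region \<epsilon> m' \<Longrightarrow> \<epsilon> \<le> dist v y" using m'(1) not_mem_far by auto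
  have nb: "\<not> (w$j > w$m \<and> v$j > v$m')" for j
  proof
    assume h: "w$j > w$m \<and> v$j > v$m'"
    hence "j \<in> inflated_argmax \<epsilon> w" using m(2)[of j] by force
    moreover have "j \<in> inflated_argmax \<epsilon> v" using h m'(2)[of j] by force
    ultimately show False using dj by blast
  qed
  show ?thesis
  proof (cases "v$m' \<le> w$m")
    case True
    show ?thesis by (rule core[OF e fw fv nb True])
  next
    case False
    have "\<epsilon> \<le> norm (w - v)"
      by (rule core[OF e fv fw]) (use nb False in auto)
    thus ?thesis by (simp add: norm_minus_commute)
  qed
qed




lemma sum_ind_card:
  assumes "finite S"
  shows "(\<Sum>r\<in>S. (if P r then 1 else 0::real)) = real (card {r\<in>S. P r})"
  using assms by (simp add: sum.inter_filter[symmetric])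

lemma inner_amgm:
  fixes x y :: "'a::real_inner"
  assumes "lm > 0"
  shows "2 * inner x y \<le> lm * (norm x)^2 + (norm y)^2 / lm"
proof -
  have "0 \<le> (norm (lm *\<^sub>R x - y))^2" by simp
  also have "\<dots> = lm^2 * (norm x)^2 - 2 * lm * inner x y + (norm y)^2"
    unfolding power2_norm_eq_inner
    by (simp add: inner_diff_left inner_diff_right inner_commute power2_eq_square algebra_simps)
  finally have "2 * lm * inner x y \<le> lm * (lm * (norm x)^2 + (norm y)^2 / lm)"
    using assms by (simp add: algebra_simps power2_eq_square)
  hence "lm * (2 * inner x y) \<le> lm * (lm * (norm x)^2 + (norm y)^2 / lm)" by (simp add: algebra_simps)
  thus ?thesis using assms by (simp add: mult_le_cancel_left_pos)
qed

lemma bag_var: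
  fixes f :: "'r \<Rightarrow> 'a::real_inner" and out :: "'i \<Rightarrow> 'r \<Rightarrow> bool"
  assumes finS: "finite S" and N: "card S = N" "N > 0"
   and finI: "finite I"
   and c1: "\<And>i. i \<in> I \<Longrightarrow> real (card {r\<in>S. out i r}) = real N * q"
   and c2: "\<And>i j. i \<in> I \<Longrightarrow> j \<in> I \<Longrightarrow> i \<noteq> j \<Longrightarrow> real (card {r\<in>S. out i r \<and> out j r}) = real N * q2"
   and q: "q > 0" "q2 < q" "q2 \<le> q^2"
   and mu: "\<mu> = (1/real N) *\<^sub>R (\<Sum>r\<in>S. f r)"
  shows "(\<Sum>i\<in>I. (norm ((1/real (card {r\<in>S. out i r})) *\<^sub>R (\<Sum>r\<in>{r\<in>S. out i r}. f r) - \<mu>))^2)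
     \<le> (q - q2) / q^2 * ((1/real N) * (\<Sum>r\<in>S. (norm (f r - \<mu>))^2))"
proof -
  define x where "x r = f r - \<mu>" for r
  define u where "u i r = (if out i r then 1 else 0::real)" for i r
  define w where "w i = (\<Sum>r\<in>S. u i r *\<^sub>R x r)" for i
  define W where "W = (\<Sum>i\<in>I. (norm (w i))^2)"
  define V where "V = (\<Sum>r\<in>S. (norm (x r))^2)"
  define y where "y r = (\<Sum>i\<in>I. (u i r - q) *\<^sub>R w i)" for r
  have Npos: "real N > 0" using N by simp
  have sf: "(\<Sum>r\<in>S. f r) = real N *\<^sub>R \<mu>" using Npos by (simp add: mu)
  have sx: "(\<Sum>r\<in>S. x r) = 0" by (simp add: x_def sum_subtractf sf N sum_constant_scaleR)
  have su: "(\<Sum>r\<in>S. u i r) = real N * q" if "i \<in> I" for i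
    using sum_ind_card[OF finS, of "out i"] c1[OF that] by (simp add: u_def)
  have suu: "(\<Sum>r\<in>S. u i r * u j r) = real N * (if i = j then q else q2)" if "i \<in> I" "j \<in> I" for i j
  proof -
    have "(\<Sum>r\<in>S. u i r * u j r) = (\<Sum>r\<in>S. (if out i r \<and> out j r then 1 else 0::real))"
      by (rule sum.cong) (auto simp: u_def)
    also have "\<dots> = real (card {r\<in>S. out i r \<and> out j r})" by (rule sum_ind_card[OF finS])
    finally show ?thesis using c1[OF that(1)] c2[OF that] by auto
  qed
  have gi: "(1/real (card {r\<in>S. out i r})) *\<^sub>R (\<Sum>r\<in>{r\<in>S. out i r}. f r) - \<mu> = (1/(real N * q)) *\<^sub>R w i"
    if "i \<in> I" for i
  proof -
    have "(\<Sum>r\<in>{r\<in>S. out i r}. f r) = (\<Sum>r\<in>S. u i r *\<^sub>R f r)"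
      using finS by (simp add: sum.inter_filter u_def) (rule sum.cong, auto)
    moreover have "w i = (\<Sum>r\<in>S. u i r *\<^sub>R f r) - (\<Sum>r\<in>S. u i r) *\<^sub>R \<mu>"
      by (simp add: w_def x_def scaleR_diff_right sum_subtractf scaleR_sum_left)
    ultimately show ?thesis using c1[OF that] su[OF that] Npos q
      by (simp add: scaleR_diff_right)
  qed
  have lhs: "(\<Sum>i\<in>I. (norm ((1/real (card {r\<in>S. out i r})) *\<^sub>R (\<Sum>r\<in>{r\<in>S. out i r}. f r) - \<mu>))^2)
      = W / (real N * q)^2"
    unfolding W_def sum_divide_distrib
    by (rule sum.cong) (auto simp: gi power_divide power_mult_distrib abs_mult)
  have Wxy: "W = (\<Sum>r\<in>S. inner (x r) (y r))"
  proof -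
    have "(\<Sum>r\<in>S. inner (x r) (y r)) = (\<Sum>r\<in>S. \<Sum>i\<in>I. (u i r - q) * inner (x r) (w i))"
      by (simp add: y_def inner_sum_right)
    also have "\<dots> = (\<Sum>i\<in>I. \<Sum>r\<in>S. (u i r - q) * inner (x r) (w i))" by (rule sum.swap)
    also have "\<dots> = (\<Sum>i\<in>I. inner (w i) (w i) - q * inner (\<Sum>r\<in>S. x r) (w i))"
      by (simp add: w_def inner_sum_left left_diff_distrib sum_subtractf sum_distrib_left)
    also have "\<dots> = W" by (simp add: sx W_def power2_norm_eq_inner)
    finally show ?thesis by simp
  qed
  have Y: "(\<Sum>r\<in>S. (norm (y r))^2) \<le> real N * (q - q2) * W"
  proof -
    have "(\<Sum>r\<in>S. (norm (y r))^2)
        = (\<Sum>r\<in>S. \<Sum>i\<in>I. \<Sum>j\<in>I. ((u i r - q) * (u j r - q)) * inner (w i) (w j))"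
      by (simp add: power2_norm_eq_inner y_def inner_sum_left inner_sum_right sum_distrib_left mult_ac inner_commute)
    also have "\<dots> = (\<Sum>i\<in>I. \<Sum>j\<in>I. (\<Sum>r\<in>S. (u i r - q) * (u j r - q)) * inner (w i) (w j))"
      by (simp add: sum.swap[of _ S] sum_distrib_right)
    also have "\<dots> = (\<Sum>i\<in>I. \<Sum>j\<in>I. (real N * (q2 - q^2) + (if i = j then real N * (q - q2) else 0)) * inner (w i) (w j))"
    proof (intro sum.cong refl)
      fix i j assume ij: "i \<in> I" "j \<in> I"
      have "(\<Sum>r\<in>S. (u i r - q) * (u j r - q)) = (\<Sum>r\<in>S. u i r * u j r) - q * (\<Sum>r\<in>S. u i r) - q * (\<Sum>r\<in>S. u j r) + real N * q^2"
        by (simp add: algebra_simps sum.distrib sum_subtractf sum_distrib_left N power2_eq_square)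
      also have "\<dots> = real N * (q2 - q^2) + (if i = j then real N * (q - q2) else 0)"
        using suu[OF ij] su[OF ij(1)] su[OF ij(2)] by (simp add: algebra_simps power2_eq_square)
      finally show "(\<Sum>r\<in>S. (u i r - q) * (u j r - q)) * inner (w i) (w j) =
        (real N * (q2 - q^2) + (if i = j then real N * (q - q2) else 0)) * inner (w i) (w j)" by simp
    qed
    also have "\<dots> = (\<Sum>i\<in>I. \<Sum>j\<in>I. real N * (q2 - q^2) * inner (w i) (w j) + (if i = j then real N * (q - q2) * inner (w i) (w j) else 0))"
      by (intro sum.cong refl) (auto simp: distrib_right)
    also have "\<dots> = real N * (q2 - q^2) * (\<Sum>i\<in>I. \<Sum>j\<in>I. inner (w i) (w j)) + real N * (q - q2) * W"
      using finI by (simp add: sum.distrib sum_distrib_left W_def power2_norm_eq_inner)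
    also have "(\<Sum>i\<in>I. \<Sum>j\<in>I. inner (w i) (w j)) = (norm (\<Sum>i\<in>I. w i))^2"
      by (simp add: power2_norm_eq_inner inner_sum_left inner_sum_right) (rule sum.swap)
    finally have eq: "(\<Sum>r\<in>S. (norm (y r))^2) = real N * (q2 - q^2) * (norm (\<Sum>i\<in>I. w i))^2 + real N * (q - q2) * W" .
    have "real N * (q2 - q^2) \<le> 0" using q Npos by (simp add: mult_nonneg_nonpos)
    hence "real N * (q2 - q^2) * (norm (\<Sum>i\<in>I. w i))^2 \<le> 0" by (simp add: mult_nonpos_nonneg)
    thus ?thesis using eq by linarith
  qed
  define lm where "lm = real N * (q - q2)"
  have lam: "lm > 0" using q Npos by (simp add: lm_def)
  have "2 * W = (\<Sum>r\<in>S. 2 * inner (x r) (y r))" by (simp add: Wxy sum_distrib_left)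
  also have "\<dots> \<le> (\<Sum>r\<in>S. lm * (norm (x r))^2 + (norm (y r))^2 / lm)"
    by (rule sum_mono) (rule inner_amgm[OF lam])
  also have "\<dots> = lm * V + (\<Sum>r\<in>S. (norm (y r))^2) / lm"
    by (simp add: sum.distrib sum_distrib_left sum_divide_distrib V_def)
  also have "(\<Sum>r\<in>S. (norm (y r))^2) / lm \<le> W"
    using Y lam by (simp add: lm_def divide_le_eq mult.commute)
  finally have WV: "W \<le> lm * V" by simp
  have "W / (real N * q)^2 \<le> lm * V / (real N * q)^2"
    using WV by (simp add: divide_right_mono)
  also have "\<dots> = (q - q2) / q^2 * ((1/real N) * V)"
    using Npos q by (simp add: lm_def power2_eq_square field_simps)
  finally show ?thesis unfolding lhs V_def x_def .
qed




lemma simplex_norm_le: 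
  assumes "(z::real^'l::finite) \<in> prob_simplex"
  shows "(norm z)^2 \<le> 1"
proof -
  have z0: "\<And>i. 0 \<le> z$i" and z1: "(\<Sum>i\<in>UNIV. z$i) = 1" using assms by (auto simp: prob_simplex_def)
  have "\<And>i. z$i \<le> 1" using member_le_sum[of _ UNIV "\<lambda>i. z$i"] z0 z1 by auto
  hence "\<And>i. (z$i)^2 \<le> z$i" using z0 by (simp add: power2_eq_square mult_left_le)
  hence "(\<Sum>i\<in>UNIV. (z$i)^2) \<le> (\<Sum>i\<in>UNIV. z$i)" by (rule sum_mono)
  thus ?thesis using z1 by (simp add: norm_sq_vec)
qed

lemma sum_one_norm_ge:
  assumes "(\<Sum>i\<in>UNIV. (z::real^'l::finite)$i) = 1"
  shows "(norm z)^2 \<ge> 1 / real CARD('l)"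
proof -
  define L where "L = real CARD('l)"
  have L0: "L > 0" by (simp add: L_def)
  have "0 \<le> (\<Sum>i\<in>UNIV. (z$i - 1/L)^2)" by (simp add: sum_nonneg)
  also have "\<dots> = (\<Sum>i\<in>UNIV. (z$i)^2) - 2/L * (\<Sum>i\<in>UNIV. z$i) + L * (1/L)^2"
    by (simp add: power2_diff sum.distrib sum_subtractf sum_distrib_left L_def)
  also have "\<dots> = (norm z)^2 - 1/L"
    using assms L0 unfolding norm_sq_vec by (simp add: power2_eq_square field_simps)
  finally show ?thesis by (simp add: L_def)
qed

lemma simplex_var:
  fixes f :: "'r \<Rightarrow> real^'l::finite"
  assumes finS: "finite S" and N: "card S = N" "N > 0"
    and sx: "\<And>r. r \<in> S \<Longrightarrow> f r \<in> prob_simplex"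
    and mu: "\<mu> = (1/real N) *\<^sub>R (\<Sum>r\<in>S. f r)"
  shows "(1/real N) * (\<Sum>r\<in>S. (norm (f r - \<mu>))^2) \<le> 1 - 1 / real CARD('l)"
proof -
  have Npos: "real N > 0" using N by simp
  have sf: "(\<Sum>r\<in>S. f r) = real N *\<^sub>R \<mu>" using Npos by (simp add: mu)
  have "(\<Sum>r\<in>S. (norm (f r - \<mu>))^2) = (\<Sum>r\<in>S. (norm (f r))^2 - 2 * inner (f r) \<mu> + (norm \<mu>)^2)"
    unfolding power2_norm_eq_inner
    by (rule sum.cong) (auto simp: inner_diff_left inner_diff_right inner_commute)
  also have "\<dots> = (\<Sum>r\<in>S. (norm (f r))^2) - 2 * inner (\<Sum>r\<in>S. f r) \<mu> + real N * (norm \<mu>)^2"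
    by (simp add: sum.distrib sum_subtractf sum_distrib_left inner_sum_left N)
  also have "\<dots> = (\<Sum>r\<in>S. (norm (f r))^2) - real N * (norm \<mu>)^2"
    by (simp add: sf power2_norm_eq_inner)
  finally have eq: "(\<Sum>r\<in>S. (norm (f r - \<mu>))^2) = (\<Sum>r\<in>S. (norm (f r))^2) - real N * (norm \<mu>)^2" .
  have "(\<Sum>r\<in>S. (norm (f r))^2) \<le> (\<Sum>r\<in>S. 1)" by (rule sum_mono) (rule simplex_norm_le[OF sx])
  hence s1: "(\<Sum>r\<in>S. (norm (f r))^2) \<le> real N" using N by simp
  have "(\<Sum>i\<in>UNIV. \<mu>$i) = (1/real N) * (\<Sum>r\<in>S. \<Sum>i\<in>UNIV. f r $ i)"
    by (simp add: mu sum_component sum_distrib_left) (rule sum.swap)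
  also have "\<dots> = 1" using sx Npos N by (simp add: prob_simplex_def)
  finally have "(norm \<mu>)^2 \<ge> 1 / real CARD('l)" by (rule sum_one_norm_ge)
  hence "real N * (norm \<mu>)^2 \<ge> real N * (1 / real CARD('l))" by (rule mult_left_mono) simp
  hence "(\<Sum>r\<in>S. (norm (f r - \<mu>))^2) \<le> real N * (1 - 1 / real CARD('l))"
    using eq s1 by (simp add: algebra_simps)
  thus ?thesis using Npos by (simp add: field_simps)
qed




definition seqs :: "bag_scheme \<Rightarrow> nat set \<Rightarrow> nat \<Rightarrow> nat list set" where
  "seqs s X m = {r. length r = m \<and> set r \<subseteq> X \<and> (s = Subbagging \<longrightarrow> distinct r)}"

definition cnt :: "bag_scheme \<Rightarrow> nat \<Rightarrow> nat \<Rightarrow> nat" where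
  "cnt s k m = (case s of Bootstrap \<Rightarrow> k ^ m | Subbagging \<Rightarrow> (if m \<le> k then \<Prod>{k - m + 1 .. k} else 0))"

lemma index_seqs_eq: "index_seqs s N m = seqs s {..<N} m"
  by (simp add: index_seqs_def seqs_def)

lemma seqs_filter1: "{r \<in> seqs s X m. i \<notin> set r} = seqs s (X - {i}) m"
  by (auto simp: seqs_def)

lemma seqs_filter2: "{r \<in> seqs s X m. i \<notin> set r \<and> j \<notin> set r} = seqs s (X - {i} - {j}) m"
  by (auto simp: seqs_def)

lemma finite_seqs: "finite X \<Longrightarrow> finite (seqs s X m)"
  by (rule finite_subset[OF _ finite_lists_length_eq[of X m]]) (auto simp: seqs_def)

lemma card_seqs:
  assumes "finite X" shows "card (seqs s X m) = cnt s (card X) m"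
proof (cases s)
  case Bootstrap
  have "seqs s X m = {xs. set xs \<subseteq> X \<and> length xs = m}" by (auto simp: seqs_def Bootstrap)
  then show ?thesis using assms by (simp add: card_lists_length_eq cnt_def Bootstrap)
next
  case Subbagging
  have e: "seqs Subbagging X m = {xs. length xs = m \<and> distinct xs \<and> set xs \<subseteq> X}" by (auto simp: seqs_def)
  show ?thesis
  proof (cases "m \<le> card X")
    case True then show ?thesis using assms by (simp add: e card_lists_distinct_length_eq cnt_def Subbagging)
  next
    case False
    have "seqs s X m = {}"
    proof (rule ccontr)
      assume "seqs s X m \<noteq> {}"
      then obtain r where r: "length r = m" "distinct r" "set r \<subseteq> X" using e Subbagging by auto
      hence "card (set r) = m" by (simp add: distinct_card)
      moreover have "card (set r) \<le> card X" using r assms by (simp add: card_mono)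
      ultimately show False using False by simp
    qed
    then show ?thesis using False by (simp add: cnt_def Subbagging)
  qed
qed

lemma cntS_rel: "cnt Subbagging (Suc k) m * (Suc k - m) = Suc k * cnt Subbagging k m"
proof (cases "m \<le> k")
  case True
  define a where "a = k - m + 1"
  have a1: "Suc k - m + 1 = Suc a" using True by (simp add: a_def)
  have h: "\<And>a b::nat. a \<le> b \<Longrightarrow> \<Prod>{a..b} = a * \<Prod>{Suc a..b}"
    by (simp add: prod.head atLeastSucAtMost_greaterThanAtMost)
  have ak: "a \<le> Suc k" by (simp add: a_def)
  have "a * \<Prod>{Suc a .. Suc k} = \<Prod>{a .. Suc k}" using h[OF ak] by simp
  also have "\<dots> = \<Prod>{a..k} * Suc k" using ak by simp
  finally have "a * \<Prod>{Suc a .. Suc k} = \<Prod>{a..k} * Suc k" .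
  moreover have "a = Suc k - m" using True by (simp add: a_def)
  ultimately have fin: "\<Prod>{Suc a .. Suc k} * (Suc k - m) = Suc k * \<Prod>{a..k}" by (simp add: mult.commute)
  have cs: "\<And>K. m \<le> K \<Longrightarrow> cnt Subbagging K m = \<Prod>{K - m + 1..K}" by (simp add: cnt_def)
  have c1: "cnt Subbagging (Suc k) m = \<Prod>{Suc a..Suc k}" using True by (simp only: cs[of "Suc k"] a1)
  have c2: "cnt Subbagging k m = \<Prod>{a..k}" using True by (simp only: cs[of k] a_def)
  show ?thesis using fin by (simp only: c1 c2)
next
  case False
  then show ?thesis by (simp add: cnt_def)
qed

lemma cnt_pos: "m \<le> k \<Longrightarrow> 0 < k \<Longrightarrow> cnt s k m > 0"
  by (cases s) (auto simp: cnt_def intro!: prod_pos)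




lemma remove_nth_nth:
  assumes "length D = n" "i < n" "k < n - 1"
  shows "remove_nth i D ! k = D ! (if k < i then k else Suc k)"
  using assms by (auto simp: remove_nth_def nth_append min_def)

lemma length_remove_nth: "i < length D \<Longrightarrow> length (remove_nth i D) = length D - 1"
  by (simp add: remove_nth_def)

lemma bagged_remove:
  assumes D: "length D = n" and i: "i < n"
  shows "bagged s m A (remove_nth i D) x =
    (1/real (card {r \<in> index_seqs s n m. i \<notin> set r})) *\<^sub>R
      (\<Sum>r\<in>{r\<in>index_seqs s n m. i \<notin> set r}. A (map (\<lambda>k. D!k) r) x)"
proof -
  define sh where "sh k = (if k < i then k else Suc k)" for k
  define ush where "ush k = (if k < i then k else k - 1)" for k
  define T where "T = seqs s {..<n-1} m"
  define Si where "Si = seqs s ({..<n} - {i}) m"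
  have lr: "length (remove_nth i D) = n - 1" using D i by (simp add: length_remove_nth)
  have Tdef: "index_seqs s (length (remove_nth i D)) m = T" by (simp add: lr T_def index_seqs_eq)
  have Sidef: "{r \<in> index_seqs s n m. i \<notin> set r} = Si" by (simp add: index_seqs_eq seqs_filter1 Si_def)
  have injsh: "inj sh" by (rule injI) (auto simp: sh_def split: if_splits)
  have inj: "inj_on (map sh) T" using inj_mapI[OF injsh] by (auto intro: inj_on_subset)
  have img: "map sh ` T = Si"
  proof
    show "map sh ` T \<subseteq> Si"
    proof
      fix r assume "r \<in> map sh ` T"
      then obtain r' where r': "r' \<in> T" "r = map sh r'" by auto
      have "set r' \<subseteq> {..<n-1}" using r' by (simp add: T_def seqs_def)
      hence "set r \<subseteq> {..<n} - {i}" using r' i by (auto simp: sh_def)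
      moreover have "s = Subbagging \<longrightarrow> distinct r"
        using r' injsh by (auto simp: T_def seqs_def distinct_map inj_on_subset)
      ultimately show "r \<in> Si" using r' by (simp add: Si_def seqs_def T_def)
    qed
  next
    show "Si \<subseteq> map sh ` T"
    proof
      fix r assume r: "r \<in> Si"
      have sr: "set r \<subseteq> {..<n} - {i}" using r by (simp add: Si_def seqs_def)
      have k: "\<And>y. y \<in> set r \<Longrightarrow> sh (ush y) = y"
      proof -
        fix y assume "y \<in> set r"
        hence "y \<noteq> i" using sr by auto
        thus "sh (ush y) = y" by (auto simp: sh_def ush_def)
      qed
      have "map sh (map ush r) = r" unfolding map_map by (rule map_idI) (simp add: k)
      moreover have "map ush r \<in> T"
      proof -
        have "set (map ush r) \<subseteq> {..<n-1}" using sr i by (auto simp: ush_def)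
        moreover have "inj_on ush (set r)" using k by (metis inj_onI)
        hence "s = Subbagging \<longrightarrow> distinct (map ush r)" using r by (auto simp: Si_def seqs_def distinct_map)
        ultimately show ?thesis using r by (simp add: T_def Si_def seqs_def)
      qed
      ultimately show "r \<in> map sh ` T" by (metis image_eqI)
    qed
  qed
  have cardeq: "card T = card Si" using card_image[OF inj] img by simp
  have "(\<Sum>r\<in>Si. A (map (\<lambda>k. D!k) r) x) = (\<Sum>r'\<in>T. A (map (\<lambda>k. D!k) (map sh r')) x)"
    unfolding img[symmetric] by (simp add: sum.reindex[OF inj])
  also have "\<dots> = (\<Sum>r'\<in>T. A (map (\<lambda>k. remove_nth i D ! k) r') x)"
  proof (rule sum.cong[OF refl])
    fix r' assume "r' \<in> T"
    hence "set r' \<subseteq> {..<n-1}" by (simp add: T_def seqs_def)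
    hence "map (\<lambda>k. D!k) (map sh r') = map (\<lambda>k. remove_nth i D ! k) r'"
      using remove_nth_nth[OF D i] by (auto simp: sh_def)
    thus "A (map (\<lambda>k. D!k) (map sh r')) x = A (map (\<lambda>k. remove_nth i D ! k) r') x" by (rule arg_cong[where f="\<lambda>z. A z x"])
  qed
  finally show ?thesis unfolding bagged_def Tdef Sidef cardeq by simp
qed




lemma pow_diff_upper:
  fixes x y :: real assumes "0 \<le> y" "y \<le> x"
  shows "x^(Suc k) - y^(Suc k) \<le> real (Suc k) * (x - y) * x^k"
proof (induction k)
  case 0 then show ?case by simp
next
  case (Suc k)
  have "x^(Suc (Suc k)) - y^(Suc (Suc k)) = x * (x^(Suc k) - y^(Suc k)) + y^(Suc k) * (x - y)"
    by (simp add: algebra_simps)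
  also have "\<dots> \<le> x * (real (Suc k) * (x - y) * x^k) + x^(Suc k) * (x - y)"
    using Suc assms by (intro add_mono mult_left_mono mult_right_mono power_mono) auto
  also have "\<dots> = real (Suc (Suc k)) * (x - y) * x^(Suc k)" by (simp add: algebra_simps)
  finally show ?case .
qed

lemma pow_diff_lower:
  fixes x y :: real assumes "0 \<le> y" "y \<le> x"
  shows "real (Suc k) * (x - y) * y^k \<le> x^(Suc k) - y^(Suc k)"
proof (induction k)
  case 0 then show ?case by simp
next
  case (Suc k)
  have "real (Suc (Suc k)) * (x - y) * y^(Suc k) = y * (real (Suc k) * (x - y) * y^k) + y^(Suc k) * (x - y)"
    by (simp add: algebra_simps)
  also have "\<dots> \<le> x * (x^(Suc k) - y^(Suc k)) + y^(Suc k) * (x - y)"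
  proof -
    have "0 \<le> x^(Suc k) - y^(Suc k)" using power_mono[OF assms(2) assms(1), of "Suc k"] by simp
    hence "y * (x^(Suc k) - y^(Suc k)) \<le> x * (x^(Suc k) - y^(Suc k))" using assms by (simp add: mult_right_mono)
    moreover have "y * (real (Suc k) * (x - y) * y^k) \<le> y * (x^(Suc k) - y^(Suc k))"
      using Suc assms by (simp add: mult_left_mono)
    ultimately show ?thesis by simp
  qed
  also have "\<dots> = x^(Suc (Suc k)) - y^(Suc (Suc k))" by (simp add: algebra_simps)
  finally show ?case .
qed

lemma boot_ineq:
  fixes nn :: real and k :: nat
  assumes n2: "nn \<ge> 2"
  shows "(nn - 1) * ((1 - 1/nn)^(Suc k) - (1 - 2/nn)^(Suc k)) \<le> nn * (1 - 1/nn)^(Suc k) * (1 - (1 - 1/nn)^(Suc k))"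
proof -
  define a where "a = 1 - 1/nn"
  define b where "b = 1 - 2/nn"
  define A where "A = a^(Suc k)"
  define K where "K = a^k"
  define B where "B = b^(Suc k)"
  define m where "m = real (Suc k)"
  have npos: "nn > 0" using n2 by simp
  have a0: "0 \<le> a" "a \<le> 1" using n2 by (auto simp: a_def field_simps)
  have b0: "0 \<le> b" using n2 by (simp add: b_def field_simps)
  have ba: "b \<le> a^2" using npos by (simp add: a_def b_def power2_eq_square field_simps)
  have a2b: "a^2 - b = 1/nn^2" using npos by (simp add: a_def b_def power2_eq_square field_simps)
  have AK: "A = a * K" by (simp add: A_def K_def)
  have K0: "K \<ge> 0" using a0 by (simp add: K_def)
  have A0: "A \<ge> 0" using a0 by (simp add: A_def)
  have f1: "A^2 - B \<le> m * K^2 / nn^2"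
  proof -
    have "(a^2)^(Suc k) - b^(Suc k) \<le> real (Suc k) * (a^2 - b) * (a^2)^k"
      by (rule pow_diff_upper[OF b0 ba])
    thus ?thesis using a2b by (simp add: A_def B_def K_def m_def power_mult[symmetric] power_mult_distrib
        mult.commute[of 2] power_even_eq)
  qed
  have f2: "m * K / nn \<le> 1 - A"
  proof -
    have "real (Suc k) * (1 - a) * a^k \<le> 1^(Suc k) - a^(Suc k)"
      by (rule pow_diff_lower) (use a0 in auto)
    moreover have "1 - a = 1/nn" by (simp add: a_def)
    ultimately show ?thesis by (simp add: A_def K_def m_def)
  qed
  have nm1: "nn - 1 \<ge> 0" using n2 by simp
  have st1: "(nn - 1) * (A - B) \<le> (nn - 1) * A - (nn - 1) * A^2 + (nn - 1) * (m * K^2 / nn^2)"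
  proof -
    have "(nn - 1) * (A^2 - B) \<le> (nn - 1) * (m * K^2 / nn^2)" using f1 nm1 by (rule mult_left_mono)
    thus ?thesis by (simp add: algebra_simps)
  qed
  have "(nn - 1) * (m * K^2 / nn^2) = A * (m * K / nn)"
    using npos by (simp add: AK a_def power2_eq_square field_simps)
  also have "\<dots> \<le> A * (1 - A)" using f2 A0 by (rule mult_left_mono)
  finally have st2: "(nn - 1) * (m * K^2 / nn^2) \<le> A * (1 - A)" .
  have "(nn - 1) * (A - B) \<le> nn * A * (1 - A)"
    using st1 st2 by (simp add: algebra_simps power2_eq_square)
  thus ?thesis by (simp add: A_def B_def a_def b_def)
qed




lemma q_facts:
  fixes n m :: nat
  assumes n2: "n \<ge> 2" and m1: "m \<ge> 1" and sm: "s = Subbagging \<longrightarrow> m \<le> n - 1"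
  defines "q \<equiv> real (cnt s (n-1) m) / real (cnt s n m)"
    and "q2 \<equiv> real (cnt s (n-2) m) / real (cnt s n m)"
  shows "cnt s n m > 0" "q > 0" "q2 < q" "q2 \<le> q^2"
    "(real n - 1) * (q - q2) \<le> real n * q * (1 - q)" "p_nm s n m = 1 - q"
proof -
  have nn: "real n \<ge> 2" using n2 by simp
  have r1: "real (n - 1) = real n - 1" using n2 by simp
  have r2: "real (n - 2) = real n - 2" using n2 by simp
  obtain k where k: "m = Suc k" using m1 by (cases m) auto
  have "cnt s n m > 0 \<and> q > 0 \<and> q2 < q \<and> q2 \<le> q^2 \<and> (real n - 1) * (q - q2) \<le> real n * q * (1 - q) \<and> p_nm s n m = 1 - q"
  proof (cases s)
    case Bootstrap
    have c0: "cnt s n m > 0" using n2 by (simp add: cnt_def Bootstrap)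
    have qe: "q = (1 - 1/real n)^m"
      using n2 by (simp add: q_def cnt_def Bootstrap r1 power_divide[symmetric] diff_divide_distrib)
    have q2e: "q2 = (1 - 2/real n)^m"
      using n2 by (simp add: q2_def cnt_def Bootstrap r2 power_divide[symmetric] diff_divide_distrib)
    have a0: "0 < 1 - 1/real n" using nn by (simp add: field_simps)
    have b0: "0 \<le> 1 - 2/real n" using nn by (simp add: field_simps)
    have ba: "1 - 2/real n < 1 - 1/real n" using nn by (simp add: field_simps)
    have bsq: "1 - 2/real n \<le> (1 - 1/real n)^2" using nn by (simp add: power2_eq_square field_simps)
    have "q > 0" using a0 by (simp add: qe)
    moreover have "q2 < q" unfolding qe q2e using ba b0 m1 by (intro power_strict_mono) auto
    moreover have "q2 \<le> q^2"
    proof -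
      have "q^2 = ((1 - 1/real n)^2)^m" unfolding qe by (simp add: power_mult[symmetric] mult.commute)
      thus ?thesis unfolding q2e using bsq b0 by (simp add: power_mono)
    qed
    moreover have "(real n - 1) * (q - q2) \<le> real n * q * (1 - q)"
      unfolding qe q2e k by (rule boot_ineq[OF nn])
    moreover have "p_nm s n m = 1 - q" by (simp add: p_nm_def Bootstrap qe)
    ultimately show ?thesis using c0 by blast
  next
    case Subbagging
    have mn: "m \<le> n - 1" using sm Subbagging by simp
    have c0: "cnt s n m > 0" using mn n2 by (intro cnt_pos) auto
    have rel1: "cnt Subbagging n m * (n - m) = n * cnt Subbagging (n-1) m"
      using cntS_rel[of "n-1" m] n2 by (simp add: Suc_diff_le)
    have rel2: "cnt Subbagging (n-1) m * (n - 1 - m) = (n - 1) * cnt Subbagging (n-2) m"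
    proof -
      have e: "Suc (n-2) = n - 1" using n2 by simp
      show ?thesis using cntS_rel[of "n-2" m] unfolding e .
    qed
    have C: "real (cnt s n m) > 0" using c0 by simp
    have rm: "real (n - m) = real n - real m" using mn by simp
    have rm1: "real (n - 1 - m) = real n - 1 - real m" using mn n2 by (simp add: of_nat_diff)
    have qe: "q = (real n - real m) / real n"
    proof -
      have "real (cnt s n m) * (real n - real m) = real n * real (cnt s (n-1) m)"
        using arg_cong[OF rel1, of real] unfolding of_nat_mult rm Subbagging .
      thus ?thesis using C nn by (simp add: q_def field_simps)
    qed
    have q2e: "q2 = q * (real n - 1 - real m) / (real n - 1)"
    proof -
      have "real (cnt s (n-1) m) * (real n - 1 - real m) = (real n - 1) * real (cnt s (n-2) m)"
        using arg_cong[OF rel2, of real] unfolding of_nat_mult rm1 r1 Subbagging .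
      hence h: "real (cnt s (n-1) m) * (real n - 1 - real m) = (real n - 1) * real (cnt s (n-2) m)" .
      have "q * (real n - 1 - real m) / (real n - 1) = (real (cnt s (n-1) m) * (real n - 1 - real m)) / (real (cnt s n m) * (real n - 1))"
        by (simp add: q_def)
      also have "\<dots> = ((real n - 1) * real (cnt s (n-2) m)) / (real (cnt s n m) * (real n - 1))" by (simp only: h)
      also have "\<dots> = q2" using nn by (simp add: q2_def)
      finally show ?thesis by simp
    qed
    have mr: "1 \<le> real m" "real m \<le> real n - 1" using m1 mn n2 by auto
    have "q > 0" using mr nn by (simp add: qe field_simps)
    moreover have "q2 < q"
    proof -
      have "(real n - 1 - real m) / (real n - 1) < 1" using mr nn by (simp add: field_simps)
      thus ?thesis using \<open>q > 0\<close> by (simp add: q2e) (metis mult_strict_left_mono mult.right_neutral times_divide_eq_right)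
    qed
    moreover have "q2 \<le> q^2"
    proof -
      have "(real n - 1 - real m) / (real n - 1) \<le> q" using mr nn by (simp add: qe field_simps)
      thus ?thesis using \<open>q > 0\<close> by (simp add: q2e power2_eq_square)
        (metis less_eq_real_def mult_left_mono times_divide_eq_right)
    qed
    moreover have "(real n - 1) * (q - q2) \<le> real n * q * (1 - q)"
      using mr nn by (simp add: q2e qe field_simps)
    moreover have "p_nm s n m = 1 - q" using nn by (simp add: p_nm_def Subbagging qe field_simps)
    ultimately show ?thesis using c0 by blast
  qed
  thus "cnt s n m > 0" "q > 0" "q2 < q" "q2 \<le> q^2"
    "(real n - 1) * (q - q2) \<le> real n * q * (1 - q)" "p_nm s n m = 1 - q" by auto
qed




lemma final_arith:
  fixes nn q q2 e Lf tot :: real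
  assumes n2: "nn \<ge> 2" and q0: "q > 0" and e0: "e > 0" and Lf: "0 \<le> Lf"
    and key: "(nn - 1) * (q - q2) \<le> nn * q * (1 - q)"
    and tot: "tot \<le> (q - q2) / q^2 * Lf / e^2"
  shows "(1/nn) * tot \<le> e powr (-2) * (Lf / (nn - 1)) * ((1 - q) / (1 - (1 - q)))"
proof -
  have ep: "e powr (-2) = 1 / e^2" using e0 by (simp add: powr_minus powr_realpow divide_inverse)
  have nn1: "nn - 1 > 0" using n2 by simp
  have "(q - q2) / (nn * q^2) = ((nn - 1) * (q - q2)) / (nn * (nn - 1) * q^2)"
    using nn1 by simp
  also have "\<dots> \<le> (nn * q * (1 - q)) / (nn * (nn - 1) * q^2)"
    by (rule divide_right_mono[OF key]) (use n2 nn1 in simp)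
  also have "\<dots> = (1 - q) / ((nn - 1) * q)"
    using n2 q0 nn1 by (simp add: power2_eq_square)
  finally have k2: "(q - q2) / (nn * q^2) \<le> (1 - q) / ((nn - 1) * q)" .
  have "(1/nn) * tot \<le> (1/nn) * ((q - q2) / q^2 * Lf / e^2)"
    using tot n2 by (intro mult_left_mono) auto
  also have "\<dots> = ((q - q2) / (nn * q^2)) * (Lf / e^2)" by (simp add: field_simps)
  also have "\<dots> \<le> ((1 - q) / ((nn - 1) * q)) * (Lf / e^2)"
    by (rule mult_right_mono[OF k2]) (use Lf e0 in simp)
  also have "\<dots> = e powr (-2) * (Lf / (nn - 1)) * ((1 - q) / (1 - (1 - q)))"
    unfolding ep by (simp add: field_simps)
  finally show ?thesis .
qed

theorem theorem1:
  fixes A :: "('x,'l::finite) algorithm"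
    and s :: bag_scheme and n m :: nat and \<epsilon> :: real
  assumes "n \<ge> 2" and "m \<ge> 1" and "s = Subbagging \<longrightarrow> m \<le> n - 1"
    and "\<epsilon> > 0"
    and "\<And>D x. A D x \<in> prob_simplex"
  shows "selection_stable (\<lambda>D x. inflated_argmax \<epsilon> (bagged s m A D x))
           (\<epsilon> powr (-2) * ((1 - 1 / real CARD('l)) / (real n - 1))
              * (p_nm s n m / (1 - p_nm s n m))) n"
proof -
  note n2 = assms(1) and m1 = assms(2) and sm = assms(3) and e0 = assms(4) and hsimp = assms(5)
  define q where "q = real (cnt s (n-1) m) / real (cnt s n m)"
  define q2 where "q2 = real (cnt s (n-2) m) / real (cnt s n m)"
  have cpos: "cnt s n m > 0" and q0: "q > 0" and qq2: "q2 < q" and q2sq: "q2 \<le> q^2"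
    and key: "(real n - 1) * (q - q2) \<le> real n * q * (1 - q)" and pq: "p_nm s n m = 1 - q"
    using q_facts[OF n2 m1 sm] unfolding q_def q2_def by auto
  show ?thesis unfolding selection_stable_def
  proof (intro allI impI)
    fix D :: "('x,'l) dataset" and x :: 'x
    assume D: "length D = n"
    define S where "S = index_seqs s n m"
    define N where "N = card S"
    define f where "f r = A (map (\<lambda>k. D!k) r) x" for r
    define \<mu> where "\<mu> = bagged s m A D x"
    have finS: "finite S" by (simp add: S_def index_seqs_eq finite_seqs)
    have NS: "N = cnt s n m" by (simp add: N_def S_def index_seqs_eq card_seqs)
    have Npos: "N > 0" using cpos NS by simp
    have mu: "\<mu> = (1/real N) *\<^sub>R (\<Sum>r\<in>S. f r)"
      by (simp add: \<mu>_def bagged_def D S_def N_def f_def)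
    have c1: "real (card {r\<in>S. i \<notin> set r}) = real N * q" if "i \<in> {..<n}" for i
    proof -
      have "card {r\<in>S. i \<notin> set r} = cnt s (n-1) m"
        using that by (simp add: S_def index_seqs_eq seqs_filter1 card_seqs)
      thus ?thesis using Npos NS by (simp add: q_def)
    qed
    have c2: "real (card {r\<in>S. i \<notin> set r \<and> j \<notin> set r}) = real N * q2"
      if "i \<in> {..<n}" "j \<in> {..<n}" "i \<noteq> j" for i j
    proof -
      have "card ({..<n} - {i} - {j}) = n - 2" using that by (simp add: card_Diff_singleton_if)
      hence "card {r\<in>S. i \<notin> set r \<and> j \<notin> set r} = cnt s (n-2) m"
        by (simp add: S_def index_seqs_eq seqs_filter2 card_seqs)
      thus ?thesis using Npos NS by (simp add: q2_def)
    qed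
    have bv: "(\<Sum>i\<in>{..<n}. (norm ((1/real (card {r\<in>S. i \<notin> set r})) *\<^sub>R (\<Sum>r\<in>{r\<in>S. i \<notin> set r}. f r) - \<mu>))^2)
      \<le> (q - q2) / q^2 * ((1/real N) * (\<Sum>r\<in>S. (norm (f r - \<mu>))^2))"
      by (rule bag_var[OF finS N_def[symmetric] Npos finite_lessThan c1 c2 q0 qq2 q2sq mu])
    have sv: "(1/real N) * (\<Sum>r\<in>S. (norm (f r - \<mu>))^2) \<le> 1 - 1 / real CARD('l)"
      by (rule simplex_var[OF finS N_def[symmetric] Npos _ mu]) (simp add: f_def hsimp)
    have gi: "bagged s m A (remove_nth i D) x = (1/real (card {r\<in>S. i \<notin> set r})) *\<^sub>R (\<Sum>r\<in>{r\<in>S. i \<notin> set r}. f r)"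
      if "i < n" for i
      using bagged_remove[OF D that] by (simp add: S_def f_def)
    define tot where "tot = (\<Sum>i\<in>{..<n}. (norm (bagged s m A (remove_nth i D) x - \<mu>))^2)"
    have cq: "(q - q2) / q^2 \<ge> 0" using qq2 by simp
    have t1: "tot = (\<Sum>i\<in>{..<n}. (norm ((1/real (card {r\<in>S. i \<notin> set r})) *\<^sub>R (\<Sum>r\<in>{r\<in>S. i \<notin> set r}. f r) - \<mu>))^2)"
      unfolding tot_def by (rule sum.cong) (simp_all add: gi)
    have tot_le: "tot \<le> (q - q2) / q^2 * (1 - 1 / real CARD('l))"
      using t1 bv mult_left_mono[OF sv cq] by linarith
    have mk: "(\<Sum>i<n. if inflated_argmax \<epsilon> (bagged s m A D x) \<inter> inflated_argmax \<epsilon> (bagged s m A (remove_nth i D) x) = {} then 1 else 0)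
        \<le> tot / \<epsilon>^2"
      unfolding tot_def sum_divide_distrib
    proof (rule sum_mono)
      fix i assume "i \<in> {..<n}"
      show "(if inflated_argmax \<epsilon> (bagged s m A D x) \<inter> inflated_argmax \<epsilon> (bagged s m A (remove_nth i D) x) = {} then 1 else 0)
        \<le> (norm (bagged s m A (remove_nth i D) x - \<mu>))^2 / \<epsilon>^2"
      proof (cases "inflated_argmax \<epsilon> (bagged s m A D x) \<inter> inflated_argmax \<epsilon> (bagged s m A (remove_nth i D) x) = {}")
        case True
        have "\<epsilon> \<le> norm (bagged s m A (remove_nth i D) x - \<mu>)"
          unfolding \<mu>_def by (rule compat[OF e0 True])
        hence "\<epsilon>^2 \<le> (norm (bagged s m A (remove_nth i D) x - \<mu>))^2" using e0 by (simp add: power_mono)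
        thus ?thesis using True e0 by simp
      next
        case False thus ?thesis by simp
      qed
    qed
    have Lf: "0 \<le> 1 - 1 / real CARD('l)" by simp
    have t2: "tot / \<epsilon>^2 \<le> (q - q2) / q^2 * (1 - 1 / real CARD('l)) / \<epsilon>^2"
      by (rule divide_right_mono[OF tot_le]) simp
    have "(1 / real n) * (tot / \<epsilon>^2) \<le> \<epsilon> powr (-2) * ((1 - 1 / real CARD('l)) / (real n - 1)) * ((1 - q) / (1 - (1 - q)))"
      by (rule final_arith[OF _ q0 e0 Lf key t2]) (use n2 in simp)
    moreover have "(1 / real n) * (\<Sum>i<n. if inflated_argmax \<epsilon> (bagged s m A D x) \<inter> inflated_argmax \<epsilon> (bagged s m A (remove_nth i D) x) = {} then 1 else 0)
       \<le> (1 / real n) * (tot / \<epsilon>^2)" using mk by (intro mult_left_mono) auto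
    ultimately show "(1 / real n) * (\<Sum>i<n. if inflated_argmax \<epsilon> (bagged s m A D x) \<inter> inflated_argmax \<epsilon> (bagged s m A (remove_nth i D) x) = {} then 1 else 0)
        \<le> \<epsilon> powr (-2) * ((1 - 1 / real CARD('l)) / (real n - 1)) * (p_nm s n m / (1 - p_nm s n m))"
      unfolding pq by linarith
  qed
qed


end
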